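(* Let $f=f_{xxx}$ be a ternary cubic form with complex coefficients. The following are equivalent: (1) $f$ is completely reducible, i.e. $f=a_xb_xc_x$ for some linear forms $a_x,b_x,c_x$; (2) the Hessian $\Delta$ of $f$ is a multiple of $f$, i.e. $\Delta=\lambda f$ for some $\lambda\in\mathbb C$; (3) $\Pi=0$ (identically as a polynomial in $x$ and $u$); (4) $\Gamma=0$ (identically as a polynomial in $x$ and $u$).
   Context: All forms are homogeneous polynomials with complex coefficients in $x=(x_1,x_2,x_3)$, whose coefficients may also depend polynomially on auxiliary indeterminates $u=(u_1,u_2,u_3)$. For $a\in\mathbb C^3$ write $a_x=a_1x_1+a_2x_2+a_3x_3$, and $u_x=u_1x_1+u_2x_2+u_3x_3$. For forms $f,g,h$ and an integer $n\ge1$ the $n$-th transvectant is $J^n[f,g,h]=\big(\Omega^n(f(x)g(y)h(z))\big)\big|_{y=z=x}$, where $y,z$ are further triples of variables and $\Omega$ is the determinant of the $3\times3$ matrix of operators with rows $(\partial/\partial x_i)_i$, $(\partial/\partial y_i)_i$, $(\partial/\partial z_i)_i$. Equivalently, expand $\det(a,b,c)^n$ as a polynomial in the entries of $a,b,c$ and replace each monomial $a^\alpha b^\beta c^\gamma$ by $\partial^\alpha f\,\partial^\beta g\,\partial^\gamma h$, where all derivatives are with respect to $x$ and $u$ is treated as a constant. Write $J=J^1$. For a ternary cubic $f$ define $\Delta=\tfrac1{12}J^2[f,f,f]$; this is the Hessian, equal to $\tfrac12\det(\partial^2f/\partial x_i\partial x_j)$. Define also $\Pi=\tfrac1{12}J[\Delta,f,u_x]$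 (degree 4 in $x$, degree 1 in $u$) and $\Gamma=\tfrac1{432}J^3[\Pi,f,u_x^3]$ (degree 1 in $x$, degree 4 in $u$). *)

theory Defs
  imports "HOL-Analysis.Analysis"
begin

text \<open>A form is represented as the polynomial function (x,u) |-> F x u on complex^3 x complex^3.
Over the infinite field of complex numbers, identity of polynomials coincides with identity
of the associated polynomial functions.\<close>

type_synonym form = "complex^3 \<Rightarrow> complex^3 \<Rightarrow> complex"

definition cubic_form :: "(nat \<Rightarrow> nat \<Rightarrow> nat \<Rightarrow> complex) \<Rightarrow> form" where
  "cubic_form c = (\<lambda>x u. \<Sum>(i,j,k)\<in>{(i,j,k). i + j + k = (3::nat)}.
       c i j k * (x$1)^i * (x$2)^j * (x$3)^k)"

definition lin_form :: "complex^3 \<Rightarrow> form" where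
  "lin_form a = (\<lambda>x u. \<Sum>i\<in>UNIV. a$i * x$i)"

definition ux :: form where
  "ux = (\<lambda>x u. \<Sum>i\<in>UNIV. u$i * x$i)"

definition pdx :: "3 \<Rightarrow> form \<Rightarrow> form" where
  "pdx i F = (\<lambda>x u. deriv (\<lambda>t. F (x + axis i t) u) 0)"

text \<open>n-th transvectant J^n[f,g,h]: Omega^(n+1) = Omega^n o Omega, with
 Omega = sum over permutations p of sign p * d/dx_(p 1) d/dy_(p 2) d/dz_(p 3),
 followed by restriction y = z = x.\<close>
fun transvectant :: "nat \<Rightarrow> form \<Rightarrow> form \<Rightarrow> form \<Rightarrow> form" where
  "transvectant 0 f g h = (\<lambda>x u. f x u * g x u * h x u)"
| "transvectant (Suc n) f g h = (\<lambda>x u. \<Sum>p\<in>{p. p permutes (UNIV::3 set)}.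
      of_int (sign p) * transvectant n (pdx (p 1) f) (pdx (p 2) g) (pdx (p 3) h) x u)"

definition hessian_form :: "form \<Rightarrow> form" where
  "hessian_form f = (\<lambda>x u. transvectant 2 f f f x u / 12)"

definition Pi_form :: "form \<Rightarrow> form" where
  "Pi_form f = (\<lambda>x u. transvectant 1 (hessian_form f) f ux x u / 12)"

definition Gamma_form :: "form \<Rightarrow> form" where
  "Gamma_form f = (\<lambda>x u. transvectant 3 (Pi_form f) f (\<lambda>x u. (ux x u)^3) x u / 432)"

end

theory Submission
  imports Defs "HOL-Computational_Algebra.Fundamental_Theorem_Algebra"
begin


inductive pf :: "form \<Rightarrow> bool" where
  pf_const: "pf (\<lambda>x u. k u)"
| pf_coord: "pf (\<lambda>x u. x $ i)"
| pf_add: "pf F \<Longrightarrow> pf G \<Longrightarrow> pf (\<lambda>x u. F x u + G x u)"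
| pf_mult: "pf F \<Longrightarrow> pf G \<Longrightarrow> pf (\<lambda>x u. F x u * G x u)"

lemma axis_nth': "axis j t $ i = (if i = j then t else 0)"
  by (simp add: axis_def)

lemma axis_smult': "t *s axis j (1::complex) = axis j t"
  by (simp add: vec_eq_iff axis_nth')

lemma sum_axis1: "(\<Sum>j\<in>UNIV. axis i (1::complex) $ j * D j) = (D i :: complex)"
proof -
  have "(\<Sum>j\<in>UNIV. axis i (1::complex) $ j * D j) = (\<Sum>j\<in>UNIV. if j = i then D j else 0)"
    by (rule sum.cong) (auto simp: axis_nth')
  then show ?thesis by simp
qed

lemma y0: "y + 0 *s axis j (1::complex) = y"
  by (simp add: vec_eq_iff)

lemma pf_line:
  assumes "pf F"
  shows "((\<lambda>t. F (x + t *s v) u) has_field_derivative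
            (\<Sum>j\<in>UNIV. v $ j * pdx j F (x + t0 *s v) u)) (at t0)"
  using assms
proof (induction arbitrary: x v u t0)
  case (pf_const k)
  then show ?case by (simp add: pdx_def)
next
  case (pf_coord i)
  have d: "pdx j (\<lambda>x u. x $ i) y u = (if i = j then 1 else 0)" for j y
  proof -
    have "((\<lambda>t. (y + axis j t) $ i) has_field_derivative (if i = j then 1 else 0)) (at 0)"
      by (auto simp: axis_nth' intro!: derivative_eq_intros)
    then show ?thesis unfolding pdx_def by (rule DERIV_imp_deriv)
  qed
  have s: "(\<Sum>j\<in>UNIV. v $ j * (if i = j then 1 else 0)) = v $ i"
  proof -
    have "(\<Sum>j\<in>UNIV. v $ j * (if i = j then 1 else 0)) = (\<Sum>j\<in>UNIV. if j = i then v $ j else 0)"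
      by (rule sum.cong) auto
    then show ?thesis by simp
  qed
  show ?case unfolding d s
    by (auto intro!: derivative_eq_intros)
next
  case (pf_add F G)
  have e: "pdx j (\<lambda>x u. F x u + G x u) y u = pdx j F y u + pdx j G y u" for j y u
  proof -
    have "((\<lambda>t. F (y + t *s axis j 1) u + G (y + t *s axis j 1) u) has_field_derivative
        pdx j F y u + pdx j G y u) (at 0)"
      using DERIV_add[OF pf_add.IH(1)[of y "axis j 1" u 0] pf_add.IH(2)[of y "axis j 1" u 0]]
      unfolding y0 sum_axis1 .
    then show ?thesis unfolding pdx_def axis_smult'
      by (rule DERIV_imp_deriv)
  qed
  show ?case unfolding e
    using DERIV_add[OF pf_add.IH(1)[of x v u t0] pf_add.IH(2)[of x v u t0]]
    unfolding distrib_left sum.distrib .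
next
  case (pf_mult F G)
  have e: "pdx j (\<lambda>x u. F x u * G x u) y u = pdx j F y u * G y u + F y u * pdx j G y u" for j y u
  proof -
    have "((\<lambda>t. F (y + t *s axis j 1) u * G (y + t *s axis j 1) u) has_field_derivative
        pdx j F y u * G y u + F y u * pdx j G y u) (at 0)"
      using DERIV_mult'[OF pf_mult.IH(1)[of y "axis j 1" u 0] pf_mult.IH(2)[of y "axis j 1" u 0]]
      unfolding y0 sum_axis1 by (simp only: add.commute mult.commute)
    then show ?thesis unfolding pdx_def axis_smult'
      by (rule DERIV_imp_deriv)
  qed
  have m: "((\<lambda>t. F (x + t *s v) u * G (x + t *s v) u) has_field_derivative
     F (x + t0 *s v) u * (\<Sum>j\<in>UNIV. v $ j * pdx j G (x + t0 *s v) u) +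
      (\<Sum>j\<in>UNIV. v $ j * pdx j F (x + t0 *s v) u) * G (x + t0 *s v) u) (at t0)"
    by (rule DERIV_mult'[OF pf_mult.IH(1) pf_mult.IH(2)])
  have q: "F y u * (\<Sum>j\<in>UNIV. v $ j * pdx j G y u) + (\<Sum>j\<in>UNIV. v $ j * pdx j F y u) * G y u
     = (\<Sum>j\<in>UNIV. v $ j * (pdx j F y u * G y u + F y u * pdx j G y u))" for y
    by (simp add: sum_distrib_left sum_distrib_right sum.distrib[symmetric] distrib_left mult_ac add.commute)
  show ?case unfolding e using m unfolding q .
qed


lemma axis0[simp]: "axis i (0::complex) = 0"
  by (simp add: vec_eq_iff axis_nth')

lemma pdx_has: "pf F \<Longrightarrow> ((\<lambda>t. F (x + axis i t) u) has_field_derivative pdx i F x u) (at 0)"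
  using pf_line[of F x "axis i 1" u 0] by (simp add: axis_smult' sum_axis1 axis0)

lemma pdx_eqI: "(\<And>x u. ((\<lambda>t. F (x + axis i t) u) has_field_derivative D x u) (at 0)) \<Longrightarrow> pdx i F = D"
  unfolding pdx_def fun_eq_iff by (blast intro: DERIV_imp_deriv)

lemma pdx_const[simp]: "pdx i (\<lambda>x u. k u) = (\<lambda>x u. 0)"
  by (simp add: pdx_def fun_eq_iff)

lemma pdx_coord[simp]: "pdx i (\<lambda>x u. x $ j) = (\<lambda>x u. if j = i then 1 else 0)"
proof -
  have "((\<lambda>t. (y + axis i t) $ j) has_field_derivative (if j = i then 1 else 0)) (at 0)" for y :: "complex^3"
    by (auto simp: axis_nth' intro!: derivative_eq_intros)
  then show ?thesis unfolding pdx_def by (auto simp: fun_eq_iff intro!: DERIV_imp_deriv)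
qed

lemma pdx_add[simp]: "pf F \<Longrightarrow> pf G \<Longrightarrow>
  pdx i (\<lambda>x u. F x u + G x u) = (\<lambda>x u. pdx i F x u + pdx i G x u)"
  by (intro pdx_eqI DERIV_add[OF pdx_has pdx_has]) auto

lemma pdx_mult[simp]: "pf F \<Longrightarrow> pf G \<Longrightarrow>
  pdx i (\<lambda>x u. F x u * G x u) = (\<lambda>x u. pdx i F x u * G x u + F x u * pdx i G x u)"
proof -
  assume a: "pf F" "pf G"
  show ?thesis unfolding fun_eq_iff
  proof (intro allI)
    fix x u
    have "((\<lambda>t. F (x + axis i t) u * G (x + axis i t) u) has_field_derivative
        F x u * pdx i G x u + pdx i F x u * G x u) (at 0)"
      using DERIV_mult'[OF pdx_has[OF a(1)] pdx_has[OF a(2)], of x i u x i u] by simp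
    then show "pdx i (\<lambda>x u. F x u * G x u) x u = pdx i F x u * G x u + F x u * pdx i G x u"
      unfolding pdx_def by (subst DERIV_imp_deriv) (auto simp: add.commute)
  qed
qed

lemma pf_pdx: "pf F \<Longrightarrow> pf (pdx i F)"
proof (induction rule: pf.induct)
  case (pf_const k) then show ?case by (simp add: pf.pf_const)
next
  case (pf_coord j)
  have "pf (\<lambda>x u. (\<lambda>_. if j = i then 1 else 0) u)" by (rule pf.pf_const)
  then show ?case by simp
next
  case (pf_add F G) then show ?case by (simp add: pf.pf_add)
next
  case (pf_mult F G) then show ?case by (simp add: pf.pf_add pf.pf_mult)
qed

lemma pf_c[simp,intro]: "pf (\<lambda>x u. c)"
  using pf_const[of "\<lambda>_. c"] by simp

lemma pf_cu[simp,intro]: "pf (\<lambda>x u. k u)" by (rule pf_const)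
lemma pf_coord'[simp,intro]: "pf (\<lambda>x u. x $ i)" by (rule pf_coord)
lemma pf_add'[simp,intro]: "pf F \<Longrightarrow> pf G \<Longrightarrow> pf (\<lambda>x u. F x u + G x u)" by (rule pf_add)
lemma pf_mult'[simp,intro]: "pf F \<Longrightarrow> pf G \<Longrightarrow> pf (\<lambda>x u. F x u * G x u)" by (rule pf_mult)

lemma pf_minus[simp,intro]: "pf F \<Longrightarrow> pf G \<Longrightarrow> pf (\<lambda>x u. F x u - G x u)"
proof -
  assume "pf F" "pf G"
  then have "pf (\<lambda>x u. F x u + (\<lambda>_. -1) u * G x u)" by (intro pf_add pf_mult pf_const)
  then show ?thesis by simp
qed

lemma pf_uminus[simp,intro]: "pf F \<Longrightarrow> pf (\<lambda>x u. - F x u)"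
proof -
  assume "pf F"
  then have "pf (\<lambda>x u. (\<lambda>_. -1) u * F x u)" by (intro pf_mult pf_const)
  then show ?thesis by simp
qed

lemma pf_pow[simp,intro]: "pf F \<Longrightarrow> pf (\<lambda>x u. F x u ^ n)"
  by (induction n) auto

lemma pf_sum[simp,intro]: "(\<And>j. j \<in> S \<Longrightarrow> pf (F j)) \<Longrightarrow> pf (\<lambda>x u. \<Sum>j\<in>S. F j x u)"
proof (induction S rule: infinite_finite_induct)
  case (infinite S) then show ?case by simp
next
  case empty then show ?case by simp
next
  case (insert a S) then show ?case by simp
qed

lemma pf_div[simp,intro]: "pf F \<Longrightarrow> pf (\<lambda>x u. F x u / c)"
proof -
  assume "pf F"
  then have "pf (\<lambda>x u. F x u * (\<lambda>_. 1/c) u)" by (intro pf_mult pf_const)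
  then show ?thesis by simp
qed

lemma pdx_minus[simp]: "pf F \<Longrightarrow> pf G \<Longrightarrow>
  pdx i (\<lambda>x u. F x u - G x u) = (\<lambda>x u. pdx i F x u - pdx i G x u)"
  by (intro pdx_eqI DERIV_diff[OF pdx_has pdx_has]) auto

lemma pdx_uminus[simp]: "pf F \<Longrightarrow> pdx i (\<lambda>x u. - F x u) = (\<lambda>x u. - pdx i F x u)"
  by (intro pdx_eqI DERIV_minus[OF pdx_has]) auto

lemma pdx_pow[simp]: "pf F \<Longrightarrow>
  pdx i (\<lambda>x u. F x u ^ n) = (\<lambda>x u. of_nat n * (pdx i F x u * F x u ^ (n - Suc 0)))"
proof (rule pdx_eqI)
  fix x u assume "pf F"
  from DERIV_power[OF pdx_has[OF this], of x i u n] show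
    "((\<lambda>t. F (x + axis i t) u ^ n) has_field_derivative of_nat n * (pdx i F x u * F x u ^ (n - Suc 0))) (at 0)"
    by simp
qed

lemma pdx_div[simp]: "pf F \<Longrightarrow> pdx i (\<lambda>x u. F x u / c) = (\<lambda>x u. pdx i F x u / c)"
  by (intro pdx_eqI DERIV_cdivide[OF pdx_has]) auto

lemma pdx_sum[simp]: "finite S \<Longrightarrow> (\<And>j. j \<in> S \<Longrightarrow> pf (F j)) \<Longrightarrow>
  pdx i (\<lambda>x u. \<Sum>j\<in>S. F j x u) = (\<lambda>x u. \<Sum>j\<in>S. pdx i (F j) x u)"
proof (induction S rule: finite_induct)
  case empty then show ?case by simp
next
  case (insert a S)
  then show ?case by (simp add: pf_sum)
qed

lemma pdx_cmult[simp]: "pf F \<Longrightarrow> pdx i (\<lambda>x u. c * F x u) = (\<lambda>x u. c * pdx i F x u)"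
  using pdx_mult[OF pf_c[of c], of F i] by simp

lemma pdx_comm: "pf F \<Longrightarrow> pdx i (pdx j F) = pdx j (pdx i F)"
proof (induction rule: pf.induct)
  case (pf_const k) then show ?case by simp
next
  case (pf_coord k)
  have "pdx i (\<lambda>x u. (\<lambda>_. if k = j then 1 else 0) u) = pdx j (\<lambda>x u. (\<lambda>_. if k = i then 1 else 0) u)"
    by simp
  then show ?case by simp
next
  case (pf_add F G) then show ?case by (simp add: pf_pdx)
next
  case (pf_mult F G) then show ?case by (simp add: pf_pdx algebra_simps)
qed

lemma pdx_cong: "(\<And>y. F y u = G y u) \<Longrightarrow> pdx i F x u = pdx i G x u"
  by (simp add: pdx_def)


lemma perm3_sum:
  "(\<Sum>p\<in>{p. p permutes (UNIV::3 set)}. of_int (sign p) * G (p 1) (p 2) (p 3)) =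
   (G 1 2 3 - G 1 3 2 - G 2 1 3 + G 2 3 1 + G 3 1 2 - G 3 2 1 :: 'a::comm_ring_1)"
proof -
  have f123: "finite {2::3, 3}" "1 \<notin> {2::3, 3}"
    by auto
  have f23: "finite {3::3}" "2 \<notin> {3::3}"
    by auto
  show ?thesis
    unfolding UNIV_3
    unfolding sum_over_permutations_insert[OF f123]
    unfolding sum_over_permutations_insert[OF f23]
    unfolding permutes_sing
    by (simp add: sign_swap_id permutation_swap_id sign_compose sign_id swap_id_eq algebra_simps)
qed

lemma T_expand: "transvectant (Suc n) f g h x u =
   transvectant n (pdx 1 f) (pdx 2 g) (pdx 3 h) x u - transvectant n (pdx 1 f) (pdx 3 g) (pdx 2 h) x u
 - transvectant n (pdx 2 f) (pdx 1 g) (pdx 3 h) x u + transvectant n (pdx 2 f) (pdx 3 g) (pdx 1 h) x u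
 + transvectant n (pdx 3 f) (pdx 1 g) (pdx 2 h) x u - transvectant n (pdx 3 f) (pdx 2 g) (pdx 1 h) x u"
  using perm3_sum[where G = "\<lambda>a b c. transvectant n (pdx a f) (pdx b g) (pdx c h) x u"] by simp

lemma pf_T: "pf f \<Longrightarrow> pf g \<Longrightarrow> pf h \<Longrightarrow> pf (transvectant n f g h)"
proof (induction n arbitrary: f g h)
  case 0 then show ?case by simp
next
  case (Suc n)
  then show ?case by (simp add: pf_pdx)
qed

lemma T_zero1: "transvectant n (\<lambda>x u. 0) g h = (\<lambda>x u. 0)"
proof (induction n arbitrary: g h)
  case 0 then show ?case by simp
next
  case (Suc n)
  have "pdx i (\<lambda>x u. 0) = (\<lambda>x u. 0)" for i
    using pdx_const[of i "\<lambda>_. 0"] by simp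
  then show ?case using Suc by simp
qed

lemma detsum3:
  fixes A :: "'a::comm_ring_1^3^3"
  shows "(\<Sum>p\<in>{p. p permutes (UNIV::3 set)}. of_int (sign p) *
     (\<Sum>j\<in>UNIV. \<Sum>k\<in>UNIV. \<Sum>l\<in>UNIV. A$j$(p 1) * A$k$(p 2) * A$l$(p 3) * X j k l)) =
   det A * (\<Sum>p\<in>{p. p permutes (UNIV::3 set)}. of_int (sign p) * X (p 1) (p 2) (p 3))"
proof -
  let ?G = "\<lambda>a b c. (\<Sum>j\<in>UNIV. \<Sum>k\<in>UNIV. \<Sum>l\<in>UNIV. A$j$a * A$k$b * A$l$c * X j k l)"
  have e1: "(\<Sum>p\<in>{p. p permutes (UNIV::3 set)}. of_int (sign p) *
     (\<Sum>j\<in>UNIV. \<Sum>k\<in>UNIV. \<Sum>l\<in>UNIV. A$j$(p 1) * A$k$(p 2) * A$l$(p 3) * X j k l)) =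
     ?G 1 2 3 - ?G 1 3 2 - ?G 2 1 3 + ?G 2 3 1 + ?G 3 1 2 - ?G 3 2 1"
    by (rule perm3_sum)
  have e2: "(\<Sum>p\<in>{p. p permutes (UNIV::3 set)}. of_int (sign p) * X (p 1) (p 2) (p 3)) =
     X 1 2 3 - X 1 3 2 - X 2 1 3 + X 2 3 1 + X 3 1 2 - X 3 2 1"
    by (rule perm3_sum)
  show ?thesis unfolding e1 e2 unfolding det_3 sum_3 by (simp add: algebra_simps)
qed


lemma T_lin1:
  assumes "finite S" "\<And>j. j \<in> S \<Longrightarrow> pf (F j)" "pf g" "pf h"
  shows "transvectant n (\<lambda>x u. \<Sum>j\<in>S. c j * F j x u) g h x u = (\<Sum>j\<in>S. c j * transvectant n (F j) g h x u)"
  using assms(2-4)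
proof (induction n arbitrary: F g h x u)
  case 0 then show ?case by (auto simp: sum_distrib_left sum_distrib_right mult_ac intro!: sum.cong)
next
  case (Suc n)
  have e: "pdx i (\<lambda>x u. \<Sum>j\<in>S. c j * F j x u) = (\<lambda>x u. \<Sum>j\<in>S. c j * pdx i (F j) x u)" for i
    using Suc.prems assms(1) by simp
  show ?case
    unfolding transvectant.simps e
    using Suc.IH[of "\<lambda>j. pdx _ (F j)"] Suc.prems
    by (simp add: pf_pdx sum_distrib_left sum.swap[of _ _ S] mult_ac)
qed

lemma T_lin2:
  assumes "finite S" "\<And>j. j \<in> S \<Longrightarrow> pf (G j)" "pf f" "pf h"
  shows "transvectant n f (\<lambda>x u. \<Sum>j\<in>S. c j * G j x u) h x u = (\<Sum>j\<in>S. c j * transvectant n f (G j) h x u)"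
  using assms(2-4)
proof (induction n arbitrary: G f h x u)
  case 0 then show ?case by (auto simp: sum_distrib_left sum_distrib_right mult_ac intro!: sum.cong)
next
  case (Suc n)
  have e: "pdx i (\<lambda>x u. \<Sum>j\<in>S. c j * G j x u) = (\<lambda>x u. \<Sum>j\<in>S. c j * pdx i (G j) x u)" for i
    using Suc.prems assms(1) by simp
  show ?case
    unfolding transvectant.simps e
    using Suc.IH[of "\<lambda>j. pdx _ (G j)"] Suc.prems
    by (simp add: pf_pdx sum_distrib_left sum.swap[of _ _ S] mult_ac)
qed

lemma T_lin3:
  assumes "finite S" "\<And>j. j \<in> S \<Longrightarrow> pf (H j)" "pf f" "pf g"
  shows "transvectant n f g (\<lambda>x u. \<Sum>j\<in>S. c j * H j x u) x u = (\<Sum>j\<in>S. c j * transvectant n f g (H j) x u)"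
  using assms(2-4)
proof (induction n arbitrary: H f g x u)
  case 0 then show ?case by (auto simp: sum_distrib_left sum_distrib_right mult_ac intro!: sum.cong)
next
  case (Suc n)
  have e: "pdx i (\<lambda>x u. \<Sum>j\<in>S. c j * H j x u) = (\<lambda>x u. \<Sum>j\<in>S. c j * pdx i (H j) x u)" for i
    using Suc.prems assms(1) by simp
  show ?case
    unfolding transvectant.simps e
    using Suc.IH[of "\<lambda>j. pdx _ (H j)"] Suc.prems
    by (simp add: pf_pdx sum_distrib_left sum.swap[of _ _ S] mult_ac)
qed

lemma T_scale1:
  assumes "pf f" "pf g" "pf h"
  shows "transvectant n (\<lambda>x u. c * f x u) g h x u = c * transvectant n f g h x u"
  using T_lin1[of "{()}" "\<lambda>_. f" g h n "\<lambda>_. c" x u] assms by simp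

lemma pf_tr: "pf F \<Longrightarrow> pf (\<lambda>x u. F (A *v x) (\<phi> u))"
proof (induction rule: pf.induct)
  case (pf_const k)
  show ?case using pf.pf_const[of "\<lambda>u. k (\<phi> u)"] .
next
  case (pf_coord i)
  have "pf (\<lambda>x u. \<Sum>j\<in>UNIV. A$i$j * x$j)" by auto
  then show ?case by (simp add: matrix_vector_mult_def)
next
  case (pf_add F G) then show ?case by auto
next
  case (pf_mult F G) then show ?case by auto
qed

lemma pdx_tr:
  assumes "pf F"
  shows "pdx i (\<lambda>x u. F (A *v x) (\<phi> u)) = (\<lambda>x u. \<Sum>j\<in>UNIV. A$j$i * pdx j F (A *v x) (\<phi> u))"
proof (rule pdx_eqI)
  fix x u
  let ?c = "\<chi> j. A$j$i"
  have e: "A *v (x + axis i t) = A *v x + t *s ?c" for t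
    using exhaust_3[of i] by (auto simp add: vec_eq_iff forall_3 matrix_vector_mult_def sum_3 axis_nth' algebra_simps)
  have "((\<lambda>t. F (A *v x + t *s ?c) (\<phi> u)) has_field_derivative
     (\<Sum>j\<in>UNIV. ?c $ j * pdx j F (A *v x + 0 *s ?c) (\<phi> u))) (at 0)"
    by (rule pf_line[OF assms])
  then show "((\<lambda>t. F (A *v (x + axis i t)) (\<phi> u)) has_field_derivative
     (\<Sum>j\<in>UNIV. A$j$i * pdx j F (A *v x) (\<phi> u))) (at 0)"
    unfolding e by simp
qed


lemma T_cov:
  assumes "pf F" "pf G" "pf H"
  shows "transvectant n (\<lambda>x u. F (A *v x) (\<phi> u)) (\<lambda>x u. G (A *v x) (\<phi> u)) (\<lambda>x u. H (A *v x) (\<phi> u)) x u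
     = det A ^ n * transvectant n F G H (A *v x) (\<phi> u)"
  using assms
proof (induction n arbitrary: F G H x u)
  case 0 then show ?case by simp
next
  case (Suc n)
  have IH: "transvectant n (\<lambda>x u. pdx j F (A *v x) (\<phi> u)) (\<lambda>x u. pdx k G (A *v x) (\<phi> u))
       (\<lambda>x u. pdx l H (A *v x) (\<phi> u)) y v = det A ^ n * transvectant n (pdx j F) (pdx k G) (pdx l H) (A *v y) (\<phi> v)"
    for j k l y v
    using Suc.IH[of "pdx j F" "pdx k G" "pdx l H"] Suc.prems by (simp add: pf_pdx)
  let ?X = "\<lambda>j k l. det A ^ n * transvectant n (pdx j F) (pdx k G) (pdx l H) (A *v x) (\<phi> u)"
  have step: "transvectant n (pdx a (\<lambda>x u. F (A *v x) (\<phi> u))) (pdx b (\<lambda>x u. G (A *v x) (\<phi> u)))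
        (pdx c (\<lambda>x u. H (A *v x) (\<phi> u))) x u =
      (\<Sum>j\<in>UNIV. \<Sum>k\<in>UNIV. \<Sum>l\<in>UNIV. A$j$a * A$k$b * A$l$c * ?X j k l)" for a b c
  proof -
    have "transvectant n (pdx a (\<lambda>x u. F (A *v x) (\<phi> u))) (pdx b (\<lambda>x u. G (A *v x) (\<phi> u)))
        (pdx c (\<lambda>x u. H (A *v x) (\<phi> u))) x u =
      (\<Sum>j\<in>UNIV. A$j$a * (\<Sum>k\<in>UNIV. A$k$b * (\<Sum>l\<in>UNIV. A$l$c *
        transvectant n (\<lambda>x u. pdx j F (A *v x) (\<phi> u)) (\<lambda>x u. pdx k G (A *v x) (\<phi> u))
       (\<lambda>x u. pdx l H (A *v x) (\<phi> u)) x u)))"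
      unfolding pdx_tr[OF Suc.prems(1)] pdx_tr[OF Suc.prems(2)] pdx_tr[OF Suc.prems(3)]
      using Suc.prems by (simp add: T_lin1 T_lin2 T_lin3 pf_tr pf_pdx)
    also have "\<dots> = (\<Sum>j\<in>UNIV. \<Sum>k\<in>UNIV. \<Sum>l\<in>UNIV. A$j$a * A$k$b * A$l$c * ?X j k l)"
      unfolding IH by (simp add: sum_distrib_left mult_ac)
    finally show ?thesis .
  qed
  have "transvectant (Suc n) (\<lambda>x u. F (A *v x) (\<phi> u)) (\<lambda>x u. G (A *v x) (\<phi> u)) (\<lambda>x u. H (A *v x) (\<phi> u)) x u
     = (\<Sum>p\<in>{p. p permutes (UNIV::3 set)}. of_int (sign p) *
     (\<Sum>j\<in>UNIV. \<Sum>k\<in>UNIV. \<Sum>l\<in>UNIV. A$j$(p 1) * A$k$(p 2) * A$l$(p 3) * ?X j k l))"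
    unfolding transvectant.simps step ..
  also have "\<dots> = det A * (\<Sum>p\<in>{p. p permutes (UNIV::3 set)}. of_int (sign p) * ?X (p 1) (p 2) (p 3))"
    by (rule detsum3)
  also have "\<dots> = det A ^ Suc n * transvectant (Suc n) F G H (A *v x) (\<phi> u)"
    by (simp add: sum_distrib_left mult_ac)
  finally show ?case .
qed


lemma ux_expl: "ux x u = u$1 * x$1 + u$2 * x$2 + u$3 * x$3"
  by (simp add: ux_def sum_3)

lemma pf_ux[simp,intro]: "pf ux"
  unfolding ux_def by auto

lemma pdx_ux[simp]: "pdx i ux = (\<lambda>x u. u $ i)"
proof -
  have e: "(\<Sum>j\<in>UNIV. u$j * (if j = i then 1 else 0)) = u $ i" for u :: "complex^3"
  proof -
    have "(\<Sum>j\<in>UNIV. u$j * (if j = i then 1 else 0)) = (\<Sum>j\<in>UNIV. if j = i then u $ j else 0)"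
      by (rule sum.cong) auto
    then show ?thesis by simp
  qed
  show ?thesis unfolding ux_def by (simp add: e)
qed

lemma pf_hess[simp,intro]: "pf F \<Longrightarrow> pf (hessian_form F)"
  unfolding hessian_form_def by (intro pf_div pf_T)

lemma pf_Pi[simp,intro]: "pf F \<Longrightarrow> pf (Pi_form F)"
  unfolding Pi_form_def by (intro pf_div pf_T pf_hess pf_ux)

lemma pdx3_ux3: "pdx a (pdx b (pdx c (\<lambda>x u. ux x u ^ 3))) x u = 6 * u$a * u$b * u$c"
proof -
  have "pdx c (\<lambda>x u. ux x u ^ 3) = (\<lambda>x u. 3 * (u$c * ux x u ^ 2))"
    using pdx_pow[OF pf_ux, of c 3] by simp
  then have "pdx b (pdx c (\<lambda>x u. ux x u ^ 3)) = (\<lambda>x u. 6 * u$c * u$b * ux x u)"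
    by (simp add: fun_eq_iff power2_eq_square algebra_simps)
  then show ?thesis by (simp add: mult_ac)
qed


lemma T3_expand: "transvectant 3 f g h x u = transvectant (Suc (Suc (Suc 0))) f g h x u"
  by (simp add: numeral_3_eq_3)

lemma Gamma_e3:
  assumes F: "pf F"
  defines "P \<equiv> Pi_form F"
  shows "Gamma_form F x (axis 3 1) =
    (pdx 1 (pdx 1 (pdx 1 P)) x (axis 3 1) * pdx 2 (pdx 2 (pdx 2 F)) x (axis 3 1)
     - 3 * pdx 1 (pdx 1 (pdx 2 P)) x (axis 3 1) * pdx 1 (pdx 2 (pdx 2 F)) x (axis 3 1)
     + 3 * pdx 1 (pdx 2 (pdx 2 P)) x (axis 3 1) * pdx 1 (pdx 1 (pdx 2 F)) x (axis 3 1)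
     - pdx 2 (pdx 2 (pdx 2 P)) x (axis 3 1) * pdx 1 (pdx 1 (pdx 1 F)) x (axis 3 1)) / 72"
proof -
  have P: "pf P" unfolding P_def using F by simp
  note comm = pdx_comm[OF P] pdx_comm[OF pf_pdx[OF P]] pdx_comm[OF F] pdx_comm[OF pf_pdx[OF F]]
  show ?thesis
    unfolding Gamma_form_def P_def[symmetric] T3_expand
    apply (simp only: T_expand)
    apply (simp only: transvectant.simps(1) pdx3_ux3)
    apply (simp add: axis_nth')
    apply (simp add: comm)
    done
qed

lemma Gamma_e1:
  assumes F: "pf F"
  defines "P \<equiv> Pi_form F"
  shows "Gamma_form F x (axis 1 1) =
    (pdx 2 (pdx 2 (pdx 2 P)) x (axis 1 1) * pdx 3 (pdx 3 (pdx 3 F)) x (axis 1 1)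
     - 3 * pdx 2 (pdx 2 (pdx 3 P)) x (axis 1 1) * pdx 2 (pdx 3 (pdx 3 F)) x (axis 1 1)
     + 3 * pdx 2 (pdx 3 (pdx 3 P)) x (axis 1 1) * pdx 2 (pdx 2 (pdx 3 F)) x (axis 1 1)
     - pdx 3 (pdx 3 (pdx 3 P)) x (axis 1 1) * pdx 2 (pdx 2 (pdx 2 F)) x (axis 1 1)) / 72"
proof -
  have P: "pf P" unfolding P_def using F by simp
  note comm = pdx_comm[OF P] pdx_comm[OF pf_pdx[OF P]] pdx_comm[OF F] pdx_comm[OF pf_pdx[OF F]]
  show ?thesis
    unfolding Gamma_form_def P_def[symmetric] T3_expand
    apply (simp only: T_expand)
    apply (simp only: transvectant.simps(1) pdx3_ux3)
    apply (simp add: axis_nth')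
    apply (simp add: comm)
    done
qed

lemma Gamma_e2:
  assumes F: "pf F"
  defines "P \<equiv> Pi_form F"
  shows "Gamma_form F x (axis 2 1) =
    (pdx 3 (pdx 3 (pdx 3 P)) x (axis 2 1) * pdx 1 (pdx 1 (pdx 1 F)) x (axis 2 1)
     - 3 * pdx 3 (pdx 3 (pdx 1 P)) x (axis 2 1) * pdx 3 (pdx 1 (pdx 1 F)) x (axis 2 1)
     + 3 * pdx 3 (pdx 1 (pdx 1 P)) x (axis 2 1) * pdx 3 (pdx 3 (pdx 1 F)) x (axis 2 1)
     - pdx 1 (pdx 1 (pdx 1 P)) x (axis 2 1) * pdx 3 (pdx 3 (pdx 3 F)) x (axis 2 1)) / 72"
proof -
  have P: "pf P" unfolding P_def using F by simp
  note comm = pdx_comm[OF P] pdx_comm[OF pf_pdx[OF P]] pdx_comm[OF F] pdx_comm[OF pf_pdx[OF F]]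
  show ?thesis
    unfolding Gamma_form_def P_def[symmetric] T3_expand
    apply (simp only: T_expand)
    apply (simp only: transvectant.simps(1) pdx3_ux3)
    apply (simp add: axis_nth')
    apply (simp add: comm)
    done
qed


lemma T2_expand: "transvectant 2 f g h x u = transvectant (Suc (Suc 0)) f g h x u"
  by (simp add: numeral_2_eq_2)

lemma pdx_cong_all: "(\<And>y. F y u = G y u) \<Longrightarrow> pdx i F y u = pdx i G y u"
  by (simp add: pdx_def)

lemma pdx3_cong: "(\<And>y. F y u = G y u) \<Longrightarrow> pdx a (pdx b (pdx c F)) x u = pdx a (pdx b (pdx c G)) x u"
  by (intro pdx_cong_all) simp

lemma Pi_expl: "pf F \<Longrightarrow> Pi_form F x u = (
   pdx 1 (hessian_form F) x u * pdx 2 F x u * u$3 - pdx 1 (hessian_form F) x u * pdx 3 F x u * u$2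
 - pdx 2 (hessian_form F) x u * pdx 1 F x u * u$3 + pdx 2 (hessian_form F) x u * pdx 3 F x u * u$1
 + pdx 3 (hessian_form F) x u * pdx 1 F x u * u$2 - pdx 3 (hessian_form F) x u * pdx 2 F x u * u$1) / 12"
proof -
  assume "pf F"
  have e: "(\<Sum>p\<in>{p. p permutes (UNIV::3 set)}. of_int (sign p) *
        (pdx (p 1) (hessian_form F) x u * pdx (p 2) F x u * u $ p 3)) =
   pdx 1 (hessian_form F) x u * pdx 2 F x u * u$3 - pdx 1 (hessian_form F) x u * pdx 3 F x u * u$2
 - pdx 2 (hessian_form F) x u * pdx 1 F x u * u$3 + pdx 2 (hessian_form F) x u * pdx 3 F x u * u$1
 + pdx 3 (hessian_form F) x u * pdx 1 F x u * u$2 - pdx 3 (hessian_form F) x u * pdx 2 F x u * u$1"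
    by (rule perm3_sum)
  show ?thesis
    unfolding Pi_form_def transvectant.simps(2)[of 0, unfolded One_nat_def[symmetric]]
    by (simp add: e)
qed

definition fA :: "complex \<Rightarrow> complex \<Rightarrow> complex \<Rightarrow> complex \<Rightarrow> complex \<Rightarrow> form" where
  "fA q c0 c1 c2 c3 = (\<lambda>x u. (x$1)^3 * c0 + (x$1)^2 * (x$2) * c1 + (x$1) * (x$2)^2 * c2 + (x$1) * (x$3)^2 + (x$2)^3 * c3 + (x$2)^2 * (x$3) * q)"

lemma pf_fA: "pf (fA q c0 c1 c2 c3)" unfolding fA_def by auto

lemma fA_hess: "hessian_form (fA q c0 c1 c2 c3) = (\<lambda>x u. 12 * (x$1)^3 * c0 * c2 - 4 * (x$1)^3 * c1^2 + 36 * (x$1)^2 * (x$2) * c0 * c3 - 4 * (x$1)^2 * (x$2) * c1 * c2 + 12 * (x$1)^2 * (x$3) * q * c0 - 12 * (x$1) * (x$2)^2 * q^2 * c0 + 12 * (x$1) * (x$2)^2 * c1 * c3 - 4 * (x$1) * (x$2)^2 * c2^2 + 12 * (x$1) * (x$2) * (x$3) * q * c1 - 4 * (x$1) * (x$3)^2 * c2 - 4 * (x$2)^3 * q^2 * c1 + 8 * (x$2)^2 * (x$3) * q * c2 - 12 * (x$2) * (x$3)^2 * c3 - 4 * (x$3)^3 * q)"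
  unfolding hessian_form_def fun_eq_iff T2_expand T_expand
  apply (intro allI)
  by (simp add: fA_def; (simp add: field_simps)?; algebra?)

lemma fA_Pi1: "Pi_form (fA q c0 c1 c2 c3) x (axis 1 1) = - ((x$1)^4 * q * c0 * c1) - 2 * (x$1)^3 * (x$2) * q * c0 * c2 - (x$1)^3 * (x$2) * q * c1^2 + 6 * (x$1)^3 * (x$3) * c0 * c3 - 3 * (x$1)^2 * (x$2)^2 * q * c1 * c2 - 6 * (x$1)^2 * (x$2) * (x$3) * q^2 * c0 + 6 * (x$1)^2 * (x$2) * (x$3) * c1 * c3 + 3 * (x$1)^2 * (x$3)^2 * q * c1 - 2 * (x$1) * (x$2)^3 * q^3 * c0 - (x$1) * (x$2)^3 * q * c1 * c3 - 2 * (x$1) * (x$2)^3 * q * c2^2 - 3 * (x$1) * (x$2)^2 * (x$3) * q^2 * c1 + 6 * (x$1) * (x$2)^2 * (x$3) * c2 * c3 + 6 * (x$1) * (x$2) * (x$3)^2 * q * c2 - 2 * (x$1) * (x$3)^3 * c3 - (x$2)^4 * q^3 * c1 - 2 * (x$2)^4 * q * c2 * c3 + 6 * (x$2)^3 * (x$3) * c3^2 + 6 * (x$2)^2 * (x$3)^2 * q * c3 + 2 * (x$2) * (x$3)^3 * q^2"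
  unfolding Pi_expl[OF pf_fA] fA_hess
  by (simp add: fA_def axis_nth'; (simp add: field_simps)?; algebra?)

lemma fA_Gamma1: "Gamma_form (fA q c0 c1 c2 c3) x (axis 1 1) = (x$1) * q^2 * c2 + (x$1) * c3^2 + (x$2) * q^2 * c3 + (x$3) * q^3"
proof -
  have PP: "pdx i (pdx j (pdx k (Pi_form (fA q c0 c1 c2 c3)))) y (axis 1 1) = pdx i (pdx j (pdx k (\<lambda>x u. - ((x$1)^4 * q * c0 * c1) - 2 * (x$1)^3 * (x$2) * q * c0 * c2 - (x$1)^3 * (x$2) * q * c1^2 + 6 * (x$1)^3 * (x$3) * c0 * c3 - 3 * (x$1)^2 * (x$2)^2 * q * c1 * c2 - 6 * (x$1)^2 * (x$2) * (x$3) * q^2 * c0 + 6 * (x$1)^2 * (x$2) * (x$3) * c1 * c3 + 3 * (x$1)^2 * (x$3)^2 * q * c1 - 2 * (x$1) * (x$2)^3 * q^3 * c0 - (x$1) * (x$2)^3 * q * c1 * c3 - 2 * (x$1) * (x$2)^3 * q * c2^2 - 3 * (x$1) * (x$2)^2 * (x$3) * q^2 * c1 + 6 * (x$1) * (x$2)^2 * (x$3) * c2 * c3 + 6 * (x$1) * (x$2) * (x$3)^2 * q * c2 - 2 * (x$1) * (x$3)^3 * c3 - (x$2)^4 * q^3 * c1 - 2 * (x$2)^4 * q * c2 * c3 + 6 * (x$2)^3 * (x$3) * c3^2 + 6 * (x$2)^2 * (x$3)^2 * q * c3 + 2 * (x$2) * (x$3)^3 * q^2))) y (axis 1 1)" for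 i j k y
    by (rule pdx3_cong, rule fA_Pi1)
  show ?thesis
    unfolding Gamma_e1[OF pf_fA] PP
    by (simp add: fA_def; (simp add: field_simps)?; algebra?)
qed

lemma fA_Pi2: "Pi_form (fA q c0 c1 c2 c3) x (axis 2 1) = 3 * (x$1)^4 * q * c0^2 + 5 * (x$1)^3 * (x$2) * q * c0 * c1 - 8 * (x$1)^3 * (x$3) * c0 * c2 + 2 * (x$1)^3 * (x$3) * c1^2 + 3 * (x$1)^2 * (x$2)^2 * q * c1^2 - 18 * (x$1)^2 * (x$2) * (x$3) * c0 * c3 - 6 * (x$1)^2 * (x$3)^2 * q * c0 - 6 * (x$1) * (x$2)^3 * q * c0 * c3 + 3 * (x$1) * (x$2)^3 * q * c1 * c2 - 6 * (x$1) * (x$2)^2 * (x$3) * c1 * c3 - 3 * (x$1) * (x$2) * (x$3)^2 * q * c1 + (x$2)^4 * q^3 * c0 - (x$2)^4 * q * c1 * c3 + (x$2)^4 * q * c2^2 - (x$2)^3 * (x$3) * q^2 * c1 - 2 * (x$2)^3 * (x$3) * c2 * c3 - 2 * (x$2) * (x$3)^3 * c3 - (x$3)^4 * q"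
  unfolding Pi_expl[OF pf_fA] fA_hess
  by (simp add: fA_def axis_nth'; (simp add: field_simps)?; algebra?)

lemma fA_Gamma2: "Gamma_form (fA q c0 c1 c2 c3) x (axis 2 1) = - (4 * (x$1) * c0 * c2) + (x$1) * c1^2 - 4 * (x$2) * c0 * c3 - 4 * (x$3) * q * c0"
proof -
  have PP: "pdx i (pdx j (pdx k (Pi_form (fA q c0 c1 c2 c3)))) y (axis 2 1) = pdx i (pdx j (pdx k (\<lambda>x u. 3 * (x$1)^4 * q * c0^2 + 5 * (x$1)^3 * (x$2) * q * c0 * c1 - 8 * (x$1)^3 * (x$3) * c0 * c2 + 2 * (x$1)^3 * (x$3) * c1^2 + 3 * (x$1)^2 * (x$2)^2 * q * c1^2 - 18 * (x$1)^2 * (x$2) * (x$3) * c0 * c3 - 6 * (x$1)^2 * (x$3)^2 * q * c0 - 6 * (x$1) * (x$2)^3 * q * c0 * c3 + 3 * (x$1) * (x$2)^3 * q * c1 * c2 - 6 * (x$1) * (x$2)^2 * (x$3) * c1 * c3 - 3 * (x$1) * (x$2) * (x$3)^2 * q * c1 + (x$2)^4 * q^3 * c0 - (x$2)^4 * q * c1 * c3 + (x$2)^4 * q * c2^2 - (x$2)^3 * (x$3) * q^2 * c1 - 2 * (x$2)^3 * (x$3) * c2 * c3 - 2 * (x$2) * (x$3)^3 * c3 - (x$3)^4 * q))) y (axis 2 1)" for i j k y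
    by (rule pdx3_cong, rule fA_Pi2)
  show ?thesis
    unfolding Gamma_e2[OF pf_fA] PP
    by (simp add: fA_def; (simp add: field_simps)?; algebra?)
qed
definition fB :: "complex \<Rightarrow> complex \<Rightarrow> form" where
  "fB a b = (\<lambda>x u. (x$1)^3 * a + (x$1)^2 * (x$2) + (x$1) * (x$2)^2 + (x$1) * (x$2) * (x$3) + (x$2)^3 * b)"

lemma pf_fB: "pf (fB a b)" unfolding fB_def by auto

lemma fB_hess: "hessian_form (fB a b) = (\<lambda>x u. - (3 * (x$1)^3 * a) + (x$1)^2 * (x$2) + (x$1) * (x$2)^2 + (x$1) * (x$2) * (x$3) - 3 * (x$2)^3 * b)"
  unfolding hessian_form_def fun_eq_iff T2_expand T_expand
  apply (intro allI)
  by (simp add: fB_def; (simp add: field_simps)?; algebra?)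

lemma fB_Pi3: "Pi_form (fB a b) x (axis 3 1) = - ((x$1)^4 * a) - 2 * (x$1)^3 * (x$2) * a - (x$1)^3 * (x$3) * a + 2 * (x$1) * (x$2)^3 * b + (x$2)^4 * b + (x$2)^3 * (x$3) * b"
  unfolding Pi_expl[OF pf_fB] fB_hess
  by (simp add: fB_def axis_nth'; (simp add: field_simps)?; algebra?)

lemma fB_Gamma3: "Gamma_form (fB a b) x (axis 3 1) = - (3 * (x$1) * a * b) + (x$1) * a - 3 * (x$2) * a * b + (x$2) * b - (x$3) * a * b"
proof -
  have PP: "pdx i (pdx j (pdx k (Pi_form (fB a b)))) y (axis 3 1) = pdx i (pdx j (pdx k (\<lambda>x u. - ((x$1)^4 * a) - 2 * (x$1)^3 * (x$2) * a - (x$1)^3 * (x$3) * a + 2 * (x$1) * (x$2)^3 * b + (x$2)^4 * b + (x$2)^3 * (x$3) * b))) y (axis 3 1)" for i j k y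
    by (rule pdx3_cong, rule fB_Pi3)
  show ?thesis
    unfolding Gamma_e3[OF pf_fB] PP
    by (simp add: fB_def; (simp add: field_simps)?; algebra?)
qed
definition fC :: "complex \<Rightarrow> complex \<Rightarrow> form" where
  "fC a b = (\<lambda>x u. (x$1)^2 * (x$3) + (x$1) * (x$2)^2 * a + (x$2)^3 * b)"

lemma pf_fC: "pf (fC a b)" unfolding fC_def by auto

lemma fC_hess: "hessian_form (fC a b) = (\<lambda>x u. - (4 * (x$1)^3 * a) - 12 * (x$1)^2 * (x$2) * b)"
  unfolding hessian_form_def fun_eq_iff T2_expand T_expand
  apply (intro allI)
  by (simp add: fC_def; (simp add: field_simps)?; algebra?)

lemma fC_Pi3: "Pi_form (fC a b) x (axis 3 1) = - (2 * (x$1)^3 * (x$2) * a^2) + 2 * (x$1)^3 * (x$3) * b - 6 * (x$1)^2 * (x$2)^2 * a * b - 6 * (x$1) * (x$2)^3 * b^2"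
  unfolding Pi_expl[OF pf_fC] fC_hess
  by (simp add: fC_def axis_nth'; (simp add: field_simps)?; algebra?)

lemma fC_Gamma3: "Gamma_form (fC a b) x (axis 3 1) = (x$1) * a^3 + (x$2) * a^2 * b + (x$3) * b^2"
proof -
  have PP: "pdx i (pdx j (pdx k (Pi_form (fC a b)))) y (axis 3 1) = pdx i (pdx j (pdx k (\<lambda>x u. - (2 * (x$1)^3 * (x$2) * a^2) + 2 * (x$1)^3 * (x$3) * b - 6 * (x$1)^2 * (x$2)^2 * a * b - 6 * (x$1) * (x$2)^3 * b^2))) y (axis 3 1)" for i j k y
    by (rule pdx3_cong, rule fC_Pi3)
  show ?thesis
    unfolding Gamma_e3[OF pf_fC] PP
    by (simp add: fC_def; (simp add: field_simps)?; algebra?)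
qed



definition red :: "form \<Rightarrow> bool" where
  "red F \<longleftrightarrow> (\<exists>a b d. \<forall>x u. F x u = lin_form a x u * lin_form b x u * lin_form d x u)"

lemma lin3: "lin_form a x u = a$1 * x$1 + a$2 * x$2 + a$3 * x$3"
  by (simp add: lin_form_def sum_3)

lemma ux_tr:
  assumes "B ** A = (mat 1 :: complex^3^3)"
  shows "ux (A *v x) (transpose B *v u) = ux x u"
proof -
  have "ux x u = ux ((B ** A) *v x) u" using assms by simp
  also have "\<dots> = ux (A *v x) (transpose B *v u)"
    unfolding ux_expl matrix_vector_mul_assoc[symmetric]
    by (simp add: matrix_vector_mult_def transpose_def sum_3 algebra_simps)
  finally show ?thesis by simp
qed

lemma Gamma_cov:
  assumes F: "pf F" and BA: "B ** A = (mat 1 :: complex^3^3)"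
  shows "Gamma_form (\<lambda>x u. F (A *v x) (transpose B *v u)) x u
       = det A ^ 6 * Gamma_form F (A *v x) (transpose B *v u)"
proof -
  let ?\<phi> = "\<lambda>u. transpose B *v u"
  have uxe: "ux = (\<lambda>x u. ux (A *v x) (?\<phi> u))" using ux_tr[OF BA] by (simp add: fun_eq_iff)
  have he: "hessian_form (\<lambda>x u. F (A *v x) (?\<phi> u)) = (\<lambda>x u. det A ^ 2 * hessian_form F (A *v x) (?\<phi> u))"
    unfolding hessian_form_def fun_eq_iff using T_cov[OF F F F, of 2 A ?\<phi>] by simp
  have pe: "Pi_form (\<lambda>x u. F (A *v x) (?\<phi> u)) = (\<lambda>x u. det A ^ 3 * Pi_form F (A *v x) (?\<phi> u))"
  proof -
    have "Pi_form (\<lambda>x u. F (A *v x) (?\<phi> u)) x u =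
        transvectant 1 (\<lambda>x u. det A ^ 2 * hessian_form F (A *v x) (?\<phi> u)) (\<lambda>x u. F (A *v x) (?\<phi> u))
          (\<lambda>x u. ux (A *v x) (?\<phi> u)) x u / 12" for x u
      unfolding Pi_form_def he by (subst uxe) (rule refl)
    also have "\<dots> x u = det A ^ 2 * transvectant 1 (\<lambda>x u. hessian_form F (A *v x) (?\<phi> u)) (\<lambda>x u. F (A *v x) (?\<phi> u))
          (\<lambda>x u. ux (A *v x) (?\<phi> u)) x u / 12" for x u
      by (subst T_scale1) (auto intro!: pf_tr F)
    also have "\<dots> x u = det A ^ 3 * Pi_form F (A *v x) (?\<phi> u)" for x u
      unfolding Pi_form_def by (subst T_cov) (auto simp: F power3_eq_cube power2_eq_square)
    finally show ?thesis by (simp add: fun_eq_iff)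
  qed
  have "Gamma_form (\<lambda>x u. F (A *v x) (?\<phi> u)) x u =
        transvectant 3 (\<lambda>x u. det A ^ 3 * Pi_form F (A *v x) (?\<phi> u)) (\<lambda>x u. F (A *v x) (?\<phi> u))
          (\<lambda>x u. ux (A *v x) (?\<phi> u) ^ 3) x u / 432"
    unfolding Gamma_form_def pe by (subst uxe) (rule refl)
  also have "\<dots> = det A ^ 3 * transvectant 3 (\<lambda>x u. Pi_form F (A *v x) (?\<phi> u)) (\<lambda>x u. F (A *v x) (?\<phi> u))
          (\<lambda>x u. (\<lambda>x u. ux x u ^ 3) (A *v x) (?\<phi> u)) x u / 432"
    by (subst T_scale1) (auto intro!: pf_tr F)
  also have "\<dots> = det A ^ 6 * Gamma_form F (A *v x) (?\<phi> u)"
  proof -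
    have d: "det A ^ 3 * det A ^ 3 = det A ^ 6" by (simp add: power_add[symmetric])
    show ?thesis unfolding Gamma_form_def
      apply (subst T_cov)
      using F apply (auto simp: pf_pow)[3]
      by algebra
  qed
  finally show ?thesis .
qed

lemma step_lemma:
  fixes F :: form and A :: "complex^3^3"
  assumes F: "pf F" and nou: "\<And>x u v. F x u = F x v" and dA: "det A \<noteq> 0"
    and G0: "\<forall>x u. Gamma_form F x u = 0"
    and nxt: "(\<forall>x u. Gamma_form (\<lambda>x u. F (A *v x) u) x u = 0) \<Longrightarrow> red (\<lambda>x u. F (A *v x) u)"
  shows "red F"
proof -
  obtain B where AB: "A ** B = mat 1" and BA: "B ** A = mat 1"
    using dA unfolding invertible_det_nz[symmetric] invertible_def by blast
  have eq: "(\<lambda>x u. F (A *v x) u) = (\<lambda>x u. F (A *v x) (transpose B *v u))"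
    using nou by (simp add: fun_eq_iff)
  have "\<forall>x u. Gamma_form (\<lambda>x u. F (A *v x) u) x u = 0"
    unfolding eq Gamma_cov[OF F BA] using G0 by simp
  then have "red (\<lambda>x u. F (A *v x) u)" by (rule nxt)
  then obtain a b d where abd: "\<And>x u. F (A *v x) u = lin_form a x u * lin_form b x u * lin_form d x u"
    unfolding red_def by blast
  have lt: "lin_form a (B *v y) u = lin_form (transpose B *v a) y u" for a y u
    unfolding lin3 by (simp add: matrix_vector_mult_def transpose_def sum_3 algebra_simps)
  have "F y u = lin_form (transpose B *v a) y u * lin_form (transpose B *v b) y u * lin_form (transpose B *v d) y u" for y u
  proof -
    have "F y u = F (A *v (B *v y)) u" by (simp add: matrix_vector_mul_assoc AB)
    then show ?thesis using abd[of "B *v y" u] by (simp add: lt)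
  qed
  then show ?thesis unfolding red_def by blast
qed


lemma cubic_root:
  assumes "a \<noteq> 0"
  shows "\<exists>t::complex. a * t^3 + b * t^2 + c * t + d = 0"
proof -
  let ?p = "[:d, c, b, a:]"
  have "degree ?p = 3" using assms by simp
  then have "\<not> constant (poly ?p)" by (simp add: constant_degree)
  then obtain z where "poly ?p z = 0" using fundamental_theorem_of_algebra by blast
  then show ?thesis by (auto simp: algebra_simps power2_eq_square power3_eq_cube)
qed

lemma bin_quad:
  fixes a b c :: complex
  shows "\<exists>p1 p2 p3 p4. \<forall>X Y. a * X^2 + b * X * Y + c * Y^2 = (p1 * X + p2 * Y) * (p3 * X + p4 * Y)"
proof (cases "a = 0")
  case True
  then show ?thesis by (rule_tac x=0 in exI, rule_tac x=1 in exI, rule_tac x=b in exI, rule_tac x=c in exI)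
     (simp add: algebra_simps power2_eq_square)
next
  case False
  define s where "s = csqrt (b^2 - 4*a*c)"
  have s2: "s^2 = b^2 - 4*a*c" by (simp add: s_def)
  define r1 where "r1 = (-b + s) / (2*a)"
  define r2 where "r2 = (-b - s) / (2*a)"
  have sum: "a * (r1 + r2) = - b" using False by (simp add: r1_def r2_def field_simps)
  have prod: "a * (r1 * r2) = c"
  proof -
    have "a * (r1 * r2) = (b^2 - s^2) / (4 * a)" using False
      by (simp add: r1_def r2_def field_simps power2_eq_square)
    also have "\<dots> = c" using False by (simp add: s2 field_simps)
    finally show ?thesis .
  qed
  have "a * X^2 + b * X * Y + c * Y^2 = (a * X + (- a * r1) * Y) * (1 * X + (- r2) * Y)" for X Y
  proof -
    have "(a * X + (- a * r1) * Y) * (1 * X + (- r2) * Y) = a * X^2 - (a * (r1 + r2)) * X * Y + a * (r1 * r2) * Y^2"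
      by (simp add: algebra_simps power2_eq_square)
    then show ?thesis by (simp add: sum prod)
  qed
  then show ?thesis by blast
qed

lemma bin_cubic:
  fixes c0 c1 c2 c3 :: complex
  shows "\<exists>p1 p2 p3 p4 p5 p6. \<forall>X Y. c0 * X^3 + c1 * X^2 * Y + c2 * X * Y^2 + c3 * Y^3 =
      (p1 * X + p2 * Y) * (p3 * X + p4 * Y) * (p5 * X + p6 * Y)"
proof (cases "c0 = 0")
  case True
  obtain p1 p2 p3 p4 where p: "\<And>X Y. c1 * X^2 + c2 * X * Y + c3 * Y^2 = (p1 * X + p2 * Y) * (p3 * X + p4 * Y)"
    using bin_quad by blast
  have "c0 * X^3 + c1 * X^2 * Y + c2 * X * Y^2 + c3 * Y^3 = (0 * X + 1 * Y) * (p1 * X + p2 * Y) * (p3 * X + p4 * Y)" for X Y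
  proof -
    have "c0 * X^3 + c1 * X^2 * Y + c2 * X * Y^2 + c3 * Y^3 = Y * (c1 * X^2 + c2 * X * Y + c3 * Y^2)"
      using True by (simp add: algebra_simps power2_eq_square power3_eq_cube)
    also have "\<dots> = Y * ((p1 * X + p2 * Y) * (p3 * X + p4 * Y))" by (simp only: p)
    finally show ?thesis by (simp add: mult.assoc)
  qed
  then show ?thesis by blast
next
  case False
  obtain t where t: "c0 * t^3 + c1 * t^2 + c2 * t + c3 = 0" using cubic_root[OF False] by blast
  define e1 where "e1 = c1 + c0 * t"
  define e2 where "e2 = c2 + t * e1"
  obtain p1 p2 p3 p4 where p: "\<And>X Y. c0 * X^2 + e1 * X * Y + e2 * Y^2 = (p1 * X + p2 * Y) * (p3 * X + p4 * Y)"
    using bin_quad by blast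
  have c3: "c3 = - (c0 * t^3 + c1 * t^2 + c2 * t)" using t by algebra
  have "c0 * X^3 + c1 * X^2 * Y + c2 * X * Y^2 + c3 * Y^3 = (1 * X + (- t) * Y) * (p1 * X + p2 * Y) * (p3 * X + p4 * Y)" for X Y
  proof -
    have "c0 * X^3 + c1 * X^2 * Y + c2 * X * Y^2 + c3 * Y^3 = (1 * X + (- t) * Y) * (c0 * X^2 + e1 * X * Y + e2 * Y^2)"
      unfolding c3 e1_def e2_def by (simp add: algebra_simps power2_eq_square power3_eq_cube)
    also have "\<dots> = (1 * X + (- t) * Y) * ((p1 * X + p2 * Y) * (p3 * X + p4 * Y))" by (simp only: p)
    finally show ?thesis by (simp add: mult.assoc)
  qed
  then show ?thesis by blast
qed


definition gen9 :: "complex \<Rightarrow> complex \<Rightarrow> complex \<Rightarrow> complex \<Rightarrow> complex \<Rightarrow> complex \<Rightarrow> complex \<Rightarrow> complex \<Rightarrow> complex \<Rightarrow> form" where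
  "gen9 l1 l2 q1 q2 q3 c0 c1 c2 c3 = (\<lambda>x u. (x$3)^2 * (l1 * x$1 + l2 * x$2) + x$3 * (q1 * (x$1)^2 + q2 * x$1 * x$2 + q3 * (x$2)^2)
     + c0 * (x$1)^3 + c1 * (x$1)^2 * x$2 + c2 * x$1 * (x$2)^2 + c3 * (x$2)^3)"

definition Mt :: "complex \<Rightarrow> complex \<Rightarrow> complex \<Rightarrow> complex \<Rightarrow> complex \<Rightarrow> complex \<Rightarrow> complex \<Rightarrow> complex^3^3" where
  "Mt ma mb mc md al be s = vector [vector [ma, mb, 0], vector [mc, md, 0], vector [al, be, s]]"

lemma Mt_mult: "Mt ma mb mc md al be s *v x = vector [ma * x$1 + mb * x$2, mc * x$1 + md * x$2, al * x$1 + be * x$2 + s * x$3]"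
  by (simp add: Mt_def vec_eq_iff forall_3 matrix_vector_mult_def sum_3 vector_3)

lemma det_Mt: "det (Mt ma mb mc md al be s) = s * (ma * md - mb * mc)"
  by (simp add: Mt_def det_3 vector_3 algebra_simps)

lemma pf_gen9: "pf (gen9 l1 l2 q1 q2 q3 c0 c1 c2 c3)" unfolding gen9_def by auto

lemma gen9_tr: "(\<lambda>x u. gen9 l1 l2 q1 q2 q3 c0 c1 c2 c3 (Mt ma mb mc md al be s *v x) u) = gen9 (l1 * ma * s^2 + l2 * mc * s^2) (l1 * mb * s^2 + l2 * md * s^2) (2 * l1 * ma * al * s + 2 * l2 * mc * al * s + q1 * ma^2 * s + q2 * ma * mc * s + q3 * mc^2 * s) (2 * l1 * ma * be * s + 2 * l1 * mb * al * s + 2 * l2 * mc * be * s + 2 * l2 * md * al * s + 2 * q1 * ma * mb * s + q2 * ma * md * s + q2 * mb * mc * s + 2 * q3 * mc * md * s) (2 * l1 * mb * be * s + 2 * l2 * md * be * s + q1 * mb^2 * s + q2 * mb * md * s + q3 * md^2 * s) (l1 * ma * al^2 + l2 * mc * al^2 + q1 * ma^2 * al + q2 * ma * mc * al + q3 * mc^2 * al + c0 * ma^3 + c1 * ma^2 * mc + c2 * ma * mc^2 + c3 * mc^3) (2 * l1 * ma * al * be + l1 * mb * al^2 + 2 * l2 * mc * al * be + l2 * md * al^2 + q1 * ma^2 * be + 2 * q1 * ma * mb * al + q2 * ma * mc * be + q2 * ma * md * al + q2 * mb * mc * al + q3 * mc^2 * be + 2 * q3 * mc * md * al + 3 * c0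 * ma^2 * mb + c1 * ma^2 * md + 2 * c1 * ma * mb * mc + 2 * c2 * ma * mc * md + c2 * mb * mc^2 + 3 * c3 * mc^2 * md) (l1 * ma * be^2 + 2 * l1 * mb * al * be + l2 * mc * be^2 + 2 * l2 * md * al * be + 2 * q1 * ma * mb * be + q1 * mb^2 * al + q2 * ma * md * be + q2 * mb * mc * be + q2 * mb * md * al + 2 * q3 * mc * md * be + q3 * md^2 * al + 3 * c0 * ma * mb^2 + 2 * c1 * ma * mb * md + c1 * mb^2 * mc + c2 * ma * md^2 + 2 * c2 * mb * mc * md + 3 * c3 * mc * md^2) (l1 * mb * be^2 + l2 * md * be^2 + q1 * mb^2 * be + q2 * mb * md * be + q3 * md^2 * be + c0 * mb^3 + c1 * mb^2 * md + c2 * mb * md^2 + c3 * md^3)"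
  unfolding gen9_def Mt_mult fun_eq_iff
  by (simp add: vector_3; algebra)

lemma gen9_step:
  assumes "s * (ma * md - mb * mc) \<noteq> 0"
    and "\<forall>x u. Gamma_form (gen9 l1 l2 q1 q2 q3 c0 c1 c2 c3) x u = 0"
    and "(\<forall>x u. Gamma_form (gen9 (l1 * ma * s^2 + l2 * mc * s^2) (l1 * mb * s^2 + l2 * md * s^2) (2 * l1 * ma * al * s + 2 * l2 * mc * al * s + q1 * ma^2 * s + q2 * ma * mc * s + q3 * mc^2 * s) (2 * l1 * ma * be * s + 2 * l1 * mb * al * s + 2 * l2 * mc * be * s + 2 * l2 * md * al * s + 2 * q1 * ma * mb * s + q2 * ma * md * s + q2 * mb * mc * s + 2 * q3 * mc * md * s) (2 * l1 * mb * be * s + 2 * l2 * md * be * s + q1 * mb^2 * s + q2 * mb * md * s + q3 * md^2 * s) (l1 * ma * al^2 + l2 * mc * al^2 + q1 * ma^2 * al + q2 * ma * mc * al + q3 * mc^2 * al + c0 * ma^3 + c1 * ma^2 * mc + c2 * ma * mc^2 + c3 * mc^3) (2 * l1 * ma * al * be + l1 * mb * al^2 + 2 * l2 * mc * al * be + l2 * md * al^2 + q1 * ma^2 * be + 2 * q1 * ma * mb * al + q2 * ma * mc * be + q2 * ma * md * al + q2 * mb * mc * al + q3 * mc^2 * be + 2 * q3 * mc * md * al + 3 * c0 * ma^2 * mb + c1 * ma^2 * md + 2 * c1 * ma * mb * mc + 2 * c2 * ma * mc * md + c2 * mb * mc^2 + 3 * c3 * mc^2 * md) (l1 * ma * be^2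 + 2 * l1 * mb * al * be + l2 * mc * be^2 + 2 * l2 * md * al * be + 2 * q1 * ma * mb * be + q1 * mb^2 * al + q2 * ma * md * be + q2 * mb * mc * be + q2 * mb * md * al + 2 * q3 * mc * md * be + q3 * md^2 * al + 3 * c0 * ma * mb^2 + 2 * c1 * ma * mb * md + c1 * mb^2 * mc + c2 * ma * md^2 + 2 * c2 * mb * mc * md + 3 * c3 * mc * md^2) (l1 * mb * be^2 + l2 * md * be^2 + q1 * mb^2 * be + q2 * mb * md * be + q3 * md^2 * be + c0 * mb^3 + c1 * mb^2 * md + c2 * mb * md^2 + c3 * md^3)) x u = 0) \<Longrightarrow> red (gen9 (l1 * ma * s^2 + l2 * mc * s^2) (l1 * mb * s^2 + l2 * md * s^2) (2 * l1 * ma * al * s + 2 * l2 * mc * al * s + q1 * ma^2 * s + q2 * ma * mc * s + q3 * mc^2 * s) (2 * l1 * ma * be * s + 2 * l1 * mb * al * s + 2 * l2 * mc * be * s + 2 * l2 * md * al * s + 2 * q1 * ma * mb * s + q2 * ma * md * s + q2 * mb * mc * s + 2 * q3 * mc * md * s) (2 * l1 * mb * be * s + 2 * l2 * md * be * s + q1 * mb^2 * s + q2 * mb * md * s + q3 * md^2 * s) (l1 * ma * al^2 + l2 * mc * al^2 + q1 * ma^2 * al + q2 * ma * mc * al + q3 * mc^2 * al + c0 * ma^3 + c1 * ma^2 * mc + c2 * ma * mc^2 + c3 * mc^3) (2 * l1 * ma * al * be + l1 * mb * al^2 + 2 * l2 * mc * al * be + l2 * md * al^2 + q1 * ma^2 *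 be + 2 * q1 * ma * mb * al + q2 * ma * mc * be + q2 * ma * md * al + q2 * mb * mc * al + q3 * mc^2 * be + 2 * q3 * mc * md * al + 3 * c0 * ma^2 * mb + c1 * ma^2 * md + 2 * c1 * ma * mb * mc + 2 * c2 * ma * mc * md + c2 * mb * mc^2 + 3 * c3 * mc^2 * md) (l1 * ma * be^2 + 2 * l1 * mb * al * be + l2 * mc * be^2 + 2 * l2 * md * al * be + 2 * q1 * ma * mb * be + q1 * mb^2 * al + q2 * ma * md * be + q2 * mb * mc * be + q2 * mb * md * al + 2 * q3 * mc * md * be + q3 * md^2 * al + 3 * c0 * ma * mb^2 + 2 * c1 * ma * mb * md + c1 * mb^2 * mc + c2 * ma * md^2 + 2 * c2 * mb * mc * md + 3 * c3 * mc * md^2) (l1 * mb * be^2 + l2 * md * be^2 + q1 * mb^2 * be + q2 * mb * md * be + q3 * md^2 * be + c0 * mb^3 + c1 * mb^2 * md + c2 * mb * md^2 + c3 * md^3))"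
  shows "red (gen9 l1 l2 q1 q2 q3 c0 c1 c2 c3)"
proof (rule step_lemma[where A = "Mt ma mb mc md al be s"])
  show "pf (gen9 l1 l2 q1 q2 q3 c0 c1 c2 c3)" by (rule pf_gen9)
  show "gen9 l1 l2 q1 q2 q3 c0 c1 c2 c3 x u = gen9 l1 l2 q1 q2 q3 c0 c1 c2 c3 x v" for x u v by (simp add: gen9_def)
  show "det (Mt ma mb mc md al be s) \<noteq> 0" using assms(1) by (simp add: det_Mt)
  show "\<forall>x u. Gamma_form (gen9 l1 l2 q1 q2 q3 c0 c1 c2 c3) x u = 0" by (rule assms(2))
  show "red (\<lambda>x u. gen9 l1 l2 q1 q2 q3 c0 c1 c2 c3 (Mt ma mb mc md al be s *v x) u)"
    if "\<forall>x u. Gamma_form (\<lambda>x u. gen9 l1 l2 q1 q2 q3 c0 c1 c2 c3 (Mt ma mb mc md al be s *v x) u) x u = 0"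
    using that assms(3) unfolding gen9_tr by blast
qed


abbreviation GZ :: "form \<Rightarrow> bool" where "GZ F \<equiv> \<forall>x u. Gamma_form F x u = 0"

lemma red_vec:
  assumes "\<And>x. F x 0 = (a1 * x$1 + a2 * x$2 + a3 * x$3) * (b1 * x$1 + b2 * x$2 + b3 * x$3) * (d1 * x$1 + d2 * x$2 + d3 * x$3)"
    and "\<And>x u v. F x u = F x v"
  shows "red F"
  unfolding red_def
  apply (rule exI[of _ "vector [a1, a2, a3]"], rule exI[of _ "vector [b1, b2, b3]"], rule exI[of _ "vector [d1, d2, d3]"])
  using assms by (metis lin3 vector_3)

lemma SA:
  assumes G: "GZ (gen9 l1 l2 q1 q2 q3 c0 c1 c2 c3)" and "l1 = 1" "l2 = 0" "q1 = 0" "q2 = 0"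
  shows "red (gen9 l1 l2 q1 q2 q3 c0 c1 c2 c3)"
proof -
  have e: "gen9 l1 l2 q1 q2 q3 c0 c1 c2 c3 = fA q3 c0 c1 c2 c3"
    using assms(2-5) by (simp add: gen9_def fA_def fun_eq_iff algebra_simps)
  have G': "GZ (fA q3 c0 c1 c2 c3)" using G e by simp
  from G'[rule_format, of "axis 3 1" "axis 1 1"] have "q3^3 = 0" by (simp add: fA_Gamma1 axis_nth')
  then have q: "q3 = 0" by simp
  from G'[rule_format, of "axis 1 1" "axis 1 1"] q have c3: "c3 = 0" by (simp add: fA_Gamma1 axis_nth')
  from G'[rule_format, of "axis 1 1" "axis 2 1"] have d: "c1^2 - 4 * c0 * c2 = 0"
    by (simp add: fA_Gamma2 axis_nth' algebra_simps)
  define r0 where "r0 = csqrt c0"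
  define r2' where "r2' = csqrt c2"
  have "(2 * r0 * r2')^2 = c1^2" using d by (simp add: r0_def r2'_def power_mult_distrib)
  then have "2 * r0 * r2' = c1 \<or> 2 * r0 * r2' = - c1" by (simp add: power2_eq_iff)
  then obtain r2 where r2: "r2^2 = c2" "2 * r0 * r2 = c1"
    by (metis mult_minus_right power2_csqrt power2_minus r2'_def minus_minus)
  have r0: "r0^2 = c0" by (simp add: r0_def)
  have i2: "\<i>^2 = (-1::complex)" by simp
  show ?thesis
    unfolding e
  proof (rule red_vec)
    show "fA q3 c0 c1 c2 c3 x 0 = (1 * x$1 + 0 * x$2 + 0 * x$3) * ((\<i>*r0) * x$1 + (\<i>*r2) * x$2 + 1 * x$3)
      * ((-\<i>*r0) * x$1 + (-\<i>*r2) * x$2 + 1 * x$3)" for x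
      unfolding fA_def q c3 r0[symmetric] r2(1)[symmetric] r2(2)[symmetric] using i2 by algebra
    show "fA q3 c0 c1 c2 c3 x u = fA q3 c0 c1 c2 c3 x v" for x u v by (simp add: fA_def)
  qed
qed

lemma SL1:
  assumes G: "GZ (gen9 l1 l2 q1 q2 q3 c0 c1 c2 c3)" and "l1 = 1" "l2 = 0"
  shows "red (gen9 l1 l2 q1 q2 q3 c0 c1 c2 c3)"
  apply (rule gen9_step[where ma=1 and mb=0 and mc=0 and md=1 and al="-q1/2" and be="-q2/2" and s=1])
    apply simp
   apply (rule G)
  apply (rule SA, assumption)
  using assms(2,3) by simp_all

lemma SL:
  assumes G: "GZ (gen9 l1 l2 q1 q2 q3 c0 c1 c2 c3)" and "l1 \<noteq> 0"
  shows "red (gen9 l1 l2 q1 q2 q3 c0 c1 c2 c3)"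
  apply (rule gen9_step[where ma="1/l1" and mb="-l2/l1" and mc=0 and md=1 and al=0 and be=0 and s=1])
    apply (simp add: assms(2))
   apply (rule G)
  apply (rule SL1, assumption)
  using assms(2) by simp_all

lemma SL':
  assumes G: "GZ (gen9 l1 l2 q1 q2 q3 c0 c1 c2 c3)" and "l1 = 0" "l2 \<noteq> 0"
  shows "red (gen9 l1 l2 q1 q2 q3 c0 c1 c2 c3)"
  apply (rule gen9_step[where ma=0 and mb=1 and mc=1 and md=0 and al=0 and be=0 and s=1])
    apply simp
   apply (rule G)
  apply (rule SL, assumption)
  using assms(2,3) by simp_all

lemma S0:
  assumes "l1 = 0" "l2 = 0" "q1 = 0" "q2 = 0" "q3 = 0"
  shows "red (gen9 l1 l2 q1 q2 q3 c0 c1 c2 c3)"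
proof -
  obtain p1 p2 p3 p4 p5 p6 where p: "\<And>X Y. c0 * X^3 + c1 * X^2 * Y + c2 * X * Y^2 + c3 * Y^3 =
      (p1 * X + p2 * Y) * (p3 * X + p4 * Y) * (p5 * X + p6 * Y)"
    using bin_cubic by blast
  show ?thesis
  proof (rule red_vec)
    show "gen9 l1 l2 q1 q2 q3 c0 c1 c2 c3 x 0 = (p1 * x$1 + p2 * x$2 + 0 * x$3) * (p3 * x$1 + p4 * x$2 + 0 * x$3)
      * (p5 * x$1 + p6 * x$2 + 0 * x$3)" for x
      using p[of "x$1" "x$2"] assms by (simp add: gen9_def mult.assoc)
    show "gen9 l1 l2 q1 q2 q3 c0 c1 c2 c3 x u = gen9 l1 l2 q1 q2 q3 c0 c1 c2 c3 x v" for x u v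
      by (simp add: gen9_def)
  qed
qed

lemma SB:
  assumes G: "GZ (gen9 l1 l2 q1 q2 q3 c0 c1 c2 c3)" and "l1 = 0" "l2 = 0" "q1 = 0" "q2 = 1" "q3 = 0" "c1 = 1" "c2 = 1"
   
  shows "red (gen9 l1 l2 q1 q2 q3 c0 c1 c2 c3)"
proof -
  have e: "gen9 l1 l2 q1 q2 q3 c0 c1 c2 c3 = fB c0 c3"
    using assms(2-8) by (simp add: gen9_def fB_def fun_eq_iff algebra_simps)
  have G': "GZ (fB c0 c3)" using G e by simp
  from G'[rule_format, of "axis 3 1" "axis 3 1"] have ab: "c0 * c3 = 0" by (simp add: fB_Gamma3 axis_nth')
  from G'[rule_format, of "axis 1 1" "axis 3 1"] have "c0 - 3 * (c0 * c3) = 0" by (simp add: fB_Gamma3 axis_nth' algebra_simps)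
  with ab have a: "c0 = 0" by algebra
  from G'[rule_format, of "axis 2 1" "axis 3 1"] have "c3 - 3 * (c0 * c3) = 0" by (simp add: fB_Gamma3 axis_nth' algebra_simps)
  with ab have b: "c3 = 0" by algebra
  show ?thesis
    unfolding e
  proof (rule red_vec)
    show "fB c0 c3 x 0 = (1 * x$1 + 0 * x$2 + 0 * x$3) * (0 * x$1 + 1 * x$2 + 0 * x$3)
      * (1 * x$1 + 1 * x$2 + 1 * x$3)" for x
      unfolding fB_def a b by algebra
    show "fB c0 c3 x u = fB c0 c3 x v" for x u v by (simp add: fB_def)
  qed
qed

lemma SC:
  assumes G: "GZ (gen9 l1 l2 q1 q2 q3 c0 c1 c2 c3)" and "l1 = 0" "l2 = 0" "q1 = 1" "q2 = 0" "q3 = 0" "c0 = 0" "c1 = 0"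
   
  shows "red (gen9 l1 l2 q1 q2 q3 c0 c1 c2 c3)"
proof -
  have e: "gen9 l1 l2 q1 q2 q3 c0 c1 c2 c3 = fC c2 c3"
    using assms(2-8) by (simp add: gen9_def fC_def fun_eq_iff algebra_simps)
  have G': "GZ (fC c2 c3)" using G e by simp
  from G'[rule_format, of "axis 1 1" "axis 3 1"] have a: "c2 = 0" by (simp add: fC_Gamma3 axis_nth')
  from G'[rule_format, of "axis 3 1" "axis 3 1"] have b: "c3 = 0" by (simp add: fC_Gamma3 axis_nth')
  show ?thesis
    unfolding e
  proof (rule red_vec)
    show "fC c2 c3 x 0 = (1 * x$1 + 0 * x$2 + 0 * x$3) * (1 * x$1 + 0 * x$2 + 0 * x$3)
      * (0 * x$1 + 0 * x$2 + 1 * x$3)" for x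
      unfolding fC_def a b by algebra
    show "fC c2 c3 x u = fC c2 c3 x v" for x u v by (simp add: fC_def)
  qed
qed

lemma Sxy:
  assumes G: "GZ (gen9 l1 l2 q1 q2 q3 c0 c1 c2 c3)" and "l1 = 0" "l2 = 0" "q1 = 0" "q3 = 0" "q2 \<noteq> 0"
  shows "red (gen9 l1 l2 q1 q2 q3 c0 c1 c2 c3)"
  apply (rule gen9_step[where ma=1 and mb=0 and mc=0 and md=1 and al="(1-c1)/q2" and be="(1-c2)/q2" and s="1/q2"])
    apply (simp add: assms(6))
   apply (rule G)
  apply (rule SB, assumption)
  using assms(2-6) by simp_all

lemma Sq1a:
  assumes G: "GZ (gen9 l1 l2 q1 q2 q3 c0 c1 c2 c3)" and "l1 = 0" "l2 = 0" "q1 \<noteq> 0" "q2 = 0" "q3 = 0"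
  shows "red (gen9 l1 l2 q1 q2 q3 c0 c1 c2 c3)"
  apply (rule gen9_step[where ma=1 and mb=0 and mc=0 and md=1 and al="-c0/q1" and be="-c1/q1" and s="1/q1"])
    apply (simp add: assms(4))
   apply (rule G)
  apply (rule SC, assumption)
  using assms(2-6) by simp_all

lemma Sq1b:
  assumes G: "GZ (gen9 l1 l2 q1 q2 q3 c0 c1 c2 c3)" and "l1 = 0" "l2 = 0" "q1 \<noteq> 0" "q2 = 0" "q3 \<noteq> 0"
  shows "red (gen9 l1 l2 q1 q2 q3 c0 c1 c2 c3)"
proof -
  define r where "r = csqrt q1"
  define t where "t = csqrt (- q3)"
  have r2: "r^2 = q1" and t2: "t^2 = - q3" by (simp_all add: r_def t_def)
  have q1e: "q1 = r^2" and q3e: "q3 = - (t^2)" using r2 t2 by simp_all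
  have r0: "r \<noteq> 0" using r2 assms(4) by auto
  have t0: "t \<noteq> 0" using t2 assms(6) by auto
  have e1: "q1 * (1 / (2 * r))\<^sup>2 = 1/4" using r2 r0 assms(4) by (simp add: field_simps power2_eq_square)
  have e2: "q3 * (1 / (2 * t))\<^sup>2 = -1/4" using t2 t0 assms(6) by (simp add: field_simps power2_eq_square)
  have e3: "q3 * (- 1 / (2 * t))\<^sup>2 = -1/4" using t2 t0 assms(6) by (simp add: field_simps power2_eq_square)
  have e4: "q1 * (1 / (2 * r)) * (1 / (2 * r)) = 1/4" using r2 r0 assms(4) by (simp add: field_simps power2_eq_square)
  have e5: "q3 * (1 / (2 * t)) * (- 1 / (2 * t)) = 1/4" using t2 t0 assms(6) by (simp add: field_simps power2_eq_square)
  show ?thesis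
  apply (rule gen9_step[where ma="1/(2*r)" and mb="1/(2*r)" and mc="1/(2*t)" and md="-1/(2*t)" and al=0 and be=0 and s=1])
    apply (simp add: r0 t0 field_simps)
   apply (rule G)
  apply (rule Sxy, assumption)
  using assms(2,3,5) r0 t0 by (simp_all add: q1e q3e field_simps power2_eq_square)
qed

lemma Sq1ab:
  assumes G: "GZ (gen9 l1 l2 q1 q2 q3 c0 c1 c2 c3)" and "l1 = 0" "l2 = 0" "q1 \<noteq> 0" "q2 = 0"
  shows "red (gen9 l1 l2 q1 q2 q3 c0 c1 c2 c3)"
  using Sq1a[OF G assms(2-5)] Sq1b[OF G assms(2-5)] by blast

lemma Sq1:
  assumes G: "GZ (gen9 l1 l2 q1 q2 q3 c0 c1 c2 c3)" and "l1 = 0" "l2 = 0" "q1 \<noteq> 0"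
  shows "red (gen9 l1 l2 q1 q2 q3 c0 c1 c2 c3)"
  apply (rule gen9_step[where ma=1 and mb="-q2/(2*q1)" and mc=0 and md=1 and al=0 and be=0 and s=1])
    apply simp
   apply (rule G)
  apply (rule Sq1ab, assumption)
  using assms(2-4) by (simp_all add: field_simps)

lemma Sq3:
  assumes G: "GZ (gen9 l1 l2 q1 q2 q3 c0 c1 c2 c3)" and "l1 = 0" "l2 = 0" "q1 = 0" "q3 \<noteq> 0"
  shows "red (gen9 l1 l2 q1 q2 q3 c0 c1 c2 c3)"
  apply (rule gen9_step[where ma=0 and mb=1 and mc=1 and md=0 and al=0 and be=0 and s=1])
    apply simp
   apply (rule G)
  apply (rule Sq1, assumption)
  using assms(2-5) by simp_all

lemma SL0:
  assumes G: "GZ (gen9 l1 l2 q1 q2 q3 c0 c1 c2 c3)" and "l1 = 0" "l2 = 0"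
  shows "red (gen9 l1 l2 q1 q2 q3 c0 c1 c2 c3)"
proof -
  consider "q1 \<noteq> 0" | "q1 = 0" "q3 \<noteq> 0" | "q1 = 0" "q3 = 0" "q2 \<noteq> 0" | "q1 = 0" "q2 = 0" "q3 = 0" by blast
  then show ?thesis
  proof cases
    case 1 then show ?thesis using Sq1[OF G assms(2,3)] by blast
  next
    case 2 then show ?thesis using Sq3[OF G assms(2,3)] by blast
  next
    case 3 then show ?thesis using Sxy[OF G assms(2,3)] by blast
  next
    case 4 then show ?thesis using S0[OF assms(2,3)] by blast
  qed
qed

lemma SG:
  assumes G: "GZ (gen9 l1 l2 q1 q2 q3 c0 c1 c2 c3)"
  shows "red (gen9 l1 l2 q1 q2 q3 c0 c1 c2 c3)"
proof -
  consider "l1 \<noteq> 0" | "l1 = 0" "l2 \<noteq> 0" | "l1 = 0" "l2 = 0" by blast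
  then show ?thesis
  proof cases
    case 1 then show ?thesis using SL[OF G] by blast
  next
    case 2 then show ?thesis using SL'[OF G] by blast
  next
    case 3 then show ?thesis using SL0[OF G] by blast
  qed
qed


lemma cubic_set: "{(i,j,k). i + j + k = (3::nat)} = {(0,0,3), (0,1,2), (0,2,1), (0,3,0), (1,0,2), (1,1,1), (1,2,0), (2,0,1), (2,1,0), (3,0,0)}"
proof (rule set_eqI, clarify)
  fix i j k :: nat
  show "((i,j,k) \<in> {(i,j,k). i + j + k = 3}) = ((i,j,k) \<in> {(0,0,3), (0,1,2), (0,2,1), (0,3,0), (1,0,2), (1,1,1), (1,2,0), (2,0,1), (2,1,0), (3,0,0)})"
  proof
    assume "(i,j,k) \<in> {(i,j,k). i + j + k = 3}"
    then have h: "i + j + k = 3" by simp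
    have "i = 0 \<or> i = 1 \<or> i = 2 \<or> i = 3" using h by arith
    moreover have "j = 0 \<or> j = 1 \<or> j = 2 \<or> j = 3" using h by arith
    ultimately show "(i,j,k) \<in> {(0,0,3), (0,1,2), (0,2,1), (0,3,0), (1,0,2), (1,1,1), (1,2,0), (2,0,1), (2,1,0), (3,0,0)}"
      using h by (elim disjE) simp_all
  qed auto
qed

lemma cubic_expl: "cubic_form c x u = c 0 0 3 * (x$1)^0 * (x$2)^0 * (x$3)^3 + c 0 1 2 * (x$1)^0 * (x$2)^1 * (x$3)^2 + c 0 2 1 * (x$1)^0 * (x$2)^2 * (x$3)^1 + c 0 3 0 * (x$1)^0 * (x$2)^3 * (x$3)^0 + c 1 0 2 * (x$1)^1 * (x$2)^0 * (x$3)^2 + c 1 1 1 * (x$1)^1 * (x$2)^1 * (x$3)^1 + c 1 2 0 * (x$1)^1 * (x$2)^2 * (x$3)^0 + c 2 0 1 * (x$1)^2 * (x$2)^0 * (x$3)^1 + c 2 1 0 * (x$1)^2 * (x$2)^1 * (x$3)^0 + c 3 0 0 * (x$1)^3 * (x$2)^0 * (x$3)^0"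
  unfolding cubic_form_def cubic_set by (simp add: algebra_simps)

lemma pf_cubic: "pf (cubic_form c)"
proof -
  have "pf (\<lambda>x u. c 0 0 3 * (x$1)^0 * (x$2)^0 * (x$3)^3 + c 0 1 2 * (x$1)^0 * (x$2)^1 * (x$3)^2 + c 0 2 1 * (x$1)^0 * (x$2)^2 * (x$3)^1 + c 0 3 0 * (x$1)^0 * (x$2)^3 * (x$3)^0 + c 1 0 2 * (x$1)^1 * (x$2)^0 * (x$3)^2 + c 1 1 1 * (x$1)^1 * (x$2)^1 * (x$3)^1 + c 1 2 0 * (x$1)^1 * (x$2)^2 * (x$3)^0 + c 2 0 1 * (x$1)^2 * (x$2)^0 * (x$3)^1 + c 2 1 0 * (x$1)^2 * (x$2)^1 * (x$3)^0 + c 3 0 0 * (x$1)^3 * (x$2)^0 * (x$3)^0)" by auto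
  moreover have "cubic_form c = (\<lambda>x u. c 0 0 3 * (x$1)^0 * (x$2)^0 * (x$3)^3 + c 0 1 2 * (x$1)^0 * (x$2)^1 * (x$3)^2 + c 0 2 1 * (x$1)^0 * (x$2)^2 * (x$3)^1 + c 0 3 0 * (x$1)^0 * (x$2)^3 * (x$3)^0 + c 1 0 2 * (x$1)^1 * (x$2)^0 * (x$3)^2 + c 1 1 1 * (x$1)^1 * (x$2)^1 * (x$3)^1 + c 1 2 0 * (x$1)^1 * (x$2)^2 * (x$3)^0 + c 2 0 1 * (x$1)^2 * (x$2)^0 * (x$3)^1 + c 2 1 0 * (x$1)^2 * (x$2)^1 * (x$3)^0 + c 3 0 0 * (x$1)^3 * (x$2)^0 * (x$3)^0)" by (simp add: fun_eq_iff cubic_expl)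
  ultimately show ?thesis by simp
qed

lemma cubic_red:
  assumes G: "GZ (cubic_form c)"
  shows "red (cubic_form c)"
proof (cases "c 3 0 0 = 0")
  case True
  let ?A = "vector [vector [0, 0, 1], vector [0, 1, 0], vector [1, 0, 0]] :: complex^3^3"
  show ?thesis
  proof (rule step_lemma[where A = ?A, OF pf_cubic _ _ G])
    show "cubic_form c x u = cubic_form c x v" for x u v by (simp add: cubic_expl)
    show "det ?A \<noteq> 0" by (simp add: det_3 vector_3)
    have e: "(\<lambda>x u. cubic_form c (?A *v x) u) = gen9 (c 2 0 1) (c 2 1 0) (c 1 0 2) (c 1 1 1) (c 1 2 0) (c 0 0 3) (c 0 1 2) (c 0 2 1) (c 0 3 0)"
      unfolding fun_eq_iff cubic_expl gen9_def
      using True by (simp add: matrix_vector_mult_def sum_3 vector_3 algebra_simps)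
    show "red (\<lambda>x u. cubic_form c (?A *v x) u)" if "GZ (\<lambda>x u. cubic_form c (?A *v x) u)"
      using that unfolding e by (rule SG)
  qed
next
  case False
  obtain t where t: "c 3 0 0 * t^3 + c 2 0 1 * t^2 + c 1 0 2 * t + c 0 0 3 = 0"
    using cubic_root[OF False] by blast
  let ?A = "vector [vector [1, 0, t], vector [0, 1, 0], vector [0, 0, 1]] :: complex^3^3"
  show ?thesis
  proof (rule step_lemma[where A = ?A, OF pf_cubic _ _ G])
    show "cubic_form c x u = cubic_form c x v" for x u v by (simp add: cubic_expl)
    show "det ?A \<noteq> 0" by (simp add: det_3 vector_3)
    have c003: "c 0 0 3 = - (c 3 0 0 * t^3 + c 2 0 1 * t^2 + c 1 0 2 * t)" using t by algebra
    have e: "(\<lambda>x u. cubic_form c (?A *v x) u) = gen9 (c 1 0 2 + 2 * c 2 0 1 * t + 3 * c 3 0 0 * t^2) (c 0 1 2 + c 1 1 1 * t + c 2 1 0 * t^2) (c 2 0 1 + 3 * c 3 0 0 * t) (c 1 1 1 + 2 * c 2 1 0 * t) (c 0 2 1 + c 1 2 0 * t) (c 3 0 0) (c 2 1 0) (c 1 2 0) (c 0 3 0)"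
      unfolding fun_eq_iff cubic_expl gen9_def c003
      by (simp add: matrix_vector_mult_def sum_3 vector_3; algebra)
    show "red (\<lambda>x u. cubic_form c (?A *v x) u)" if "GZ (\<lambda>x u. cubic_form c (?A *v x) u)"
      using that unfolding e by (rule SG)
  qed
qed


lemma hess_prod:
  "hessian_form (\<lambda>x u. (a1*x$1+a2*x$2+a3*x$3)*(b1*x$1+b2*x$2+b3*x$3)*(d1*x$1+d2*x$2+d3*x$3)) x u =
   (a1*(b2*d3 - b3*d2) - a2*(b1*d3 - b3*d1) + a3*(b1*d2 - b2*d1))^2 *
   ((a1*x$1+a2*x$2+a3*x$3)*(b1*x$1+b2*x$2+b3*x$3)*(d1*x$1+d2*x$2+d3*x$3))"
  unfolding hessian_form_def T2_expand T_expand
  by (simp; algebra)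

lemma red_hess:
  assumes "red F"
  shows "\<exists>lam. \<forall>x u. hessian_form F x u = lam * F x u"
proof -
  obtain a b d where abd: "\<And>x u. F x u = lin_form a x u * lin_form b x u * lin_form d x u"
    using assms unfolding red_def by blast
  have e: "F = (\<lambda>x u. (a$1*x$1+a$2*x$2+a$3*x$3)*(b$1*x$1+b$2*x$2+b$3*x$3)*(d$1*x$1+d$2*x$2+d$3*x$3))"
    by (simp add: fun_eq_iff abd lin3)
  show ?thesis unfolding e hess_prod by blast
qed

lemma hess_Pi:
  assumes F: "pf F" and h: "\<forall>x u. hessian_form F x u = lam * F x u"
  shows "\<forall>x u. Pi_form F x u = 0"
proof (intro allI)
  fix x u
  have e: "hessian_form F = (\<lambda>x u. lam * F x u)" using h by (simp add: fun_eq_iff)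
  have "Pi_form F x u = lam * transvectant 1 F F ux x u / 12"
    unfolding Pi_form_def e by (subst T_scale1) (auto simp: F)
  also have "transvectant 1 F F ux x u = 0"
    unfolding One_nat_def T_expand by (simp add: algebra_simps)
  finally show "Pi_form F x u = 0" by simp
qed

lemma Pi_Gamma:
  assumes "\<forall>x u. Pi_form F x u = 0"
  shows "\<forall>x u. Gamma_form F x u = 0"
proof -
  have e: "Pi_form F = (\<lambda>x u. 0)" using assms by (simp add: fun_eq_iff)
  show ?thesis unfolding Gamma_form_def e T_zero1 by simp
qed

theorem theorem8p2:
  fixes c :: "nat \<Rightarrow> nat \<Rightarrow> nat \<Rightarrow> complex"
  defines "f \<equiv> cubic_form c"
  shows "((\<exists>a b d. \<forall>x u. f x u = lin_form a x u * lin_form b x u * lin_form d x u)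
            \<longleftrightarrow> (\<exists>lam::complex. \<forall>x u. hessian_form f x u = lam * f x u))
       \<and> ((\<exists>a b d. \<forall>x u. f x u = lin_form a x u * lin_form b x u * lin_form d x u)
            \<longleftrightarrow> (\<forall>x u. Pi_form f x u = 0))
       \<and> ((\<exists>a b d. \<forall>x u. f x u = lin_form a x u * lin_form b x u * lin_form d x u)
            \<longleftrightarrow> (\<forall>x u. Gamma_form f x u = 0))"
proof -
  have pf: "pf f" unfolding f_def by (rule pf_cubic)
  have 12: "red f \<Longrightarrow> \<exists>lam. \<forall>x u. hessian_form f x u = lam * f x u" by (rule red_hess)
  have 23: "\<exists>lam. \<forall>x u. hessian_form f x u = lam * f x u \<Longrightarrow> \<forall>x u. Pi_form f x u = 0"
    using hess_Pi[OF pf] by blast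
  have 34: "\<forall>x u. Pi_form f x u = 0 \<Longrightarrow> \<forall>x u. Gamma_form f x u = 0" by (rule Pi_Gamma)
  have 41: "\<forall>x u. Gamma_form f x u = 0 \<Longrightarrow> red f" unfolding f_def by (rule cubic_red)
  have r: "red f = (\<exists>a b d. \<forall>x u. f x u = lin_form a x u * lin_form b x u * lin_form d x u)"
    by (simp add: red_def)
  show ?thesis unfolding r[symmetric] using 12 23 34 41 by blast
qed


end
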